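(* Let $\bar D=(D,(M_0,\alpha_0),M_f)$ be a DPNIF with $D=(P,T,F,l,V,r,w)$ a safe and well-formed DPN over a finite set $\mathcal{E}$ of event signatures, and let $\mathcal{C}\subset\mathbb{R}$ be a finite set containing every constant occurring in a guard $r(t)$ or $w(t)$, $t\in T$, and every value $\alpha_0(v)$, $v\in V$. Then the algorithm described below (Algorithm 1) terminates on $\bar D$, and its output $\langle Q,q_0,\rightarrow,F\rangle$, with $F$ the set of computed states $(M,\tilde\alpha)$ with $M=M_f$, is the GFA induced by $\bar D$ (the algorithm is sound). Algorithm 1: initialize $Q:=\{(M_0,\tilde\alpha_0)\}$ with $\tilde\alpha_0(v)=[\alpha_0(v),\alpha_0(v)]$ for all $v\in V$, worklist $W:=\{(M_0,\tilde\alpha_0)\}$, $\rightarrow:=\emptyset$. While $W\neq\emptyset$: select and remove some $(M,\tilde\alpha)$ from $W$; for every $(t,\tilde\beta)\in enabled(M,\tilde\alpha)$: let $(M',\tilde\alpha'):=fire(M,t,\tilde\beta)$; if $(M',\tilde\alpha')\notin Q$, add it to both $Q$ and $W$; let $\psi:=l(t)$, and if $w(t)\not\equiv\top$ let $\psi:=\psi\wedge guard(t,\tilde\alpha')$; add $(M,\tilde\alpha)\xrightarrow{\psi}(M',\tilde\alpha')$ to $\rightarrow$. Here: $enabled(M,\tilde\alpha)$ is the (finite) set of pairs $(t,\tilde\beta)$ with $t\in T$ and $\tilde\beta$ a region assignment defined on $\mathrm{Var}_r(t)\cup\mathrm{Var}_w(t)$ (covering all combinations of regions of $\mathcal{P}_\mathcal{C}$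 satisfying $r(t)$ and $w(t)$) such that there exist a valuation $\alpha$ with $\alpha(v)\in\tilde\alpha(v)$ for all $v\in V$ and a partial valuation $\beta$ with $\beta(v)\in\tilde\beta(v)$ for which $t$ is enabled in $(M,\alpha)$ under $\beta$; $fire(M,t,\tilde\beta)$ returns $(M',\tilde\alpha')$ with $M'(p)=M(p)-F(p,t)+F(t,p)$ for all $p\in P$, $\tilde\alpha'(v)=\tilde\beta(v)$ for $v\in\mathrm{Var}_w(t)$ and $\tilde\alpha'(v)=\tilde\alpha(v)$ otherwise; $guard(t,\tilde\alpha')=\bigwedge_{v\in\mathrm{Var}(w(t))}\phi_v$, where $\phi_v$ is $v=c$ if $\tilde\alpha'(v)=[c,c]$, $v>c_i\wedge v<c_{i+1}$ if $\tilde\alpha'(v)=(c_i,c_{i+1})$, $v<c_1$ if $\tilde\alpha'(v)=(-\infty,c_1)$, and $v>c_m$ if $\tilde\alpha'(v)=(c_m,\infty)$.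
   Context: Event signatures: a finite set $\mathcal{E}$ of pairs $\langle n,A\rangle$ (activity name $n$, finite attribute set $A$), distinct names; $\mathcal{N}_\mathcal{E}$ is the set of names, $\mathcal{A}_\mathcal{E}$ the union of attribute sets. An event of signature $\langle n,A\rangle$ is $e=\langle n,\nu\rangle$ with $\nu:A\to\mathbb{R}$ total. Conditions $\mathcal{L}_\mathcal{E}$: $\varphi::=x\mid a\odot c\mid\neg\varphi\mid\varphi\wedge\varphi$ with $x\in\mathcal{N}_\mathcal{E}$, $a\in\mathcal{A}_\mathcal{E}$, $\odot\in\{<,=,>\}$, $c\in\mathbb{R}$; $e\models x$ iff $x=n$, $e\models a\odot c$ iff $\nu(a)$ is defined and $\nu(a)\odot c$, Boolean connectives as usual. Guards $\mathcal{G}_\mathcal{E}$ are conditions not mentioning names; an (partial) assignment $\alpha$ satisfies $a\odot c$ iff $\alpha(a)\odot c$; $\mathrm{Var}(\gamma)$ is the set of attributes in guard $\gamma$. A DPN is $D=(P,T,F,l,V,r,w)$: disjoint finite sets $P$ (places) and $T$ (transitions), flow $F:(P\times T)\cup(T\times P)\to\mathbb{N}$, labeling $l:T\to\mathcal{N}_\mathcal{E}\cup\{\tau\}$ ($\tau$ = silent), variables $V\subseteq\mathcal{A}_\mathcal{E}$, read and write guard functions $r,w:T\to\mathcal{G}_\mathcal{E}$; $\mathrm{Var}_r(t)=\mathrm{Var}(r(t))$, $\mathrm{Var}_w(t)=\mathrm{Var}(w(t))$, ${}^\bullet t=\{p\mid F(p,t)>0\}$. A state is $(M,\alpha)$ with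 $M:P\to\mathbb{N}$ and $\alpha:V\to\mathbb{R}$ total. Transition $t$ is enabled in $(M,\alpha)$ under a partial valuation $\beta:V\rightharpoonup\mathbb{R}$ iff $\beta$ is defined on $\mathrm{Var}_r(t)\cup\mathrm{Var}_w(t)$, $\beta(v)=\alpha(v)$ for $v\in\mathrm{Var}_r(t)$, $\beta\models r(t)$, $\beta\models w(t)$, and $M(p)\ge F(p,t)$ for all $p\in{}^\bullet t$. Firing yields $(M',\alpha')$ with $M'(p)=M(p)-F(p,t)+F(t,p)$, $\alpha'(v)=\beta(v)$ for $v\in\mathrm{Var}_w(t)$, $\alpha'(v)=\alpha(v)$ otherwise. Safe: every reachable marking assigns at most 1 token to each place. Well-formed: every visible $t$ with $l(t)=n$, $\langle n,A\rangle\in\mathcal{E}$, has $\mathrm{Var}_w(t)=A$, and every silent $t$ has $w(t)\equiv\top$. A DPNIF is $(D,(M_0,\alpha_0),M_f)$ with an initial state and a final marking. Interval abstraction: for $\mathcal{C}=\{c_1<\dots<c_m\}$, $\mathcal{P}_\mathcal{C}$ is the partition of $\mathbb{R}$ into $(-\infty,c_1)$, $(c_m,\infty)$, $[c_i,c_i]$ ($1\le i\le m$) and $(c_i,c_{i+1})$ ($1\le i<m$). A region assignment maps variables to elements of $\mathcal{P}_\mathcal{C}$; $\tilde\alpha$ denotes the region assignment sending $v$ to the region containing $\alpha(v)$. A guarded finite-state automaton (GFA) over $\mathcal{E}$ is $\langle Q,q_0,\rightarrow,F\rangle$ with finite state set $Q$, initial state $q_0$, transition relation $\rightarrow\subseteq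 Q\times\mathcal{L}_\mathcal{E}\times Q$ (here extended so that labels may use $\tau$ in place of a name), and final states $F\subseteq Q$. GFA induced by $\bar D$: let $S$ be the set of states reachable from $(M_0,\alpha_0)$; $(M,\alpha)\sim(M',\alpha')$ iff $M=M'$ and for every $v\in V$, $\alpha(v),\alpha'(v)$ lie in the same region of $\mathcal{P}_\mathcal{C}$; classes are represented as $(M,\tilde\alpha)$. Then $Q=S/{\sim}$; $q_0=(M_0,\tilde\alpha_0)$; $(M,\tilde\alpha)\xrightarrow{a\wedge\psi}(M',\tilde\alpha')$ iff there are $t\in T$ and $\beta$ with $(M,\alpha)$ firing $t$ under $\beta$ into $(M',\alpha')$ for some $\alpha,\alpha'$ with $\alpha(v)\in\tilde\alpha(v)$, $\alpha'(v)\in\tilde\alpha'(v)$ for all $v$, $a=l(t)$, and $\psi=\bigwedge_{v\in\mathrm{Var}(w(t))}\phi_v$ with $\phi_v$ as defined in the claim; $F=\{(M,\tilde\alpha)\mid M=M_f\}$. *)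

theory Defs
  imports Complex_Main
begin

datatype cmp = Lt | Eq | Gt

fun cmp_holds :: "cmp \<Rightarrow> real \<Rightarrow> real \<Rightarrow> bool" where
  "cmp_holds Lt x c = (x < c)"
| "cmp_holds Eq x c = (x = c)"
| "cmp_holds Gt x c = (x > c)"

datatype 'a guard =
    GTrue
  | GAtom 'a cmp real
  | GNeg "'a guard"
  | GConj "'a guard" "'a guard"

text \<open>Conditions (GFA labels); a name atom may be an activity name (Some n) or tau (None).\<close>
datatype ('n, 'a) cond =
    CLab "'n option"
  | CAtom 'a cmp real
  | CNeg "('n, 'a) cond"
  | CConj "('n, 'a) cond" "('n, 'a) cond"

fun gsat :: "('a \<Rightarrow> real option) \<Rightarrow> 'a guard \<Rightarrow> bool" where
  "gsat \<beta> GTrue = True"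
| "gsat \<beta> (GAtom a op c) = (case \<beta> a of Some x \<Rightarrow> cmp_holds op x c | None \<Rightarrow> False)"
| "gsat \<beta> (GNeg g) = (\<not> gsat \<beta> g)"
| "gsat \<beta> (GConj g h) = (gsat \<beta> g \<and> gsat \<beta> h)"

fun gvars :: "'a guard \<Rightarrow> 'a set" where
  "gvars GTrue = {}"
| "gvars (GAtom a op c) = {a}"
| "gvars (GNeg g) = gvars g"
| "gvars (GConj g h) = gvars g \<union> gvars h"

fun gconsts :: "'a guard \<Rightarrow> real set" where
  "gconsts GTrue = {}"
| "gconsts (GAtom a op c) = {c}"
| "gconsts (GNeg g) = gconsts g"
| "gconsts (GConj g h) = gconsts g \<union> gconsts h"

text \<open>Semantic validity of a guard (w(t) equivalent to top).\<close>
definition gvalid :: "'a guard \<Rightarrow> bool" where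
  "gvalid g \<longleftrightarrow> (\<forall>\<sigma> :: 'a \<Rightarrow> real. gsat (Some \<circ> \<sigma>) g)"

definition event_sigs :: "('n \<times> 'a set) set \<Rightarrow> bool" where
  "event_sigs E \<longleftrightarrow> finite E \<and> (\<forall>(n, A) \<in> E. finite A)
     \<and> (\<forall>(n, A) \<in> E. \<forall>(n', A') \<in> E. n = n' \<longrightarrow> A = A')"

definition sig_names :: "('n \<times> 'a set) set \<Rightarrow> 'n set" where
  "sig_names E = fst ` E"

definition sig_attrs :: "('n \<times> 'a set) set \<Rightarrow> 'a set" where
  "sig_attrs E = \<Union> (snd ` E)"

text \<open>Flow F is given by its two halves, extended by 0 outside (P x T) u (T x P).
  Labels: None is the silent label tau.\<close>
record ('p, 't, 'n, 'a) dpn =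
  places :: "'p set"
  trans :: "'t set"
  flow_in :: "'p \<Rightarrow> 't \<Rightarrow> nat"
  flow_out :: "'t \<Rightarrow> 'p \<Rightarrow> nat"
  lab :: "'t \<Rightarrow> 'n option"
  vars :: "'a set"
  rguard :: "'t \<Rightarrow> 'a guard"
  wguard :: "'t \<Rightarrow> 'a guard"

definition is_dpn :: "('n \<times> 'a set) set \<Rightarrow> ('p, 't, 'n, 'a) dpn \<Rightarrow> bool" where
  "is_dpn E D \<longleftrightarrow>
     finite (places D) \<and> finite (trans D)
   \<and> (\<forall>p t. (p \<notin> places D \<or> t \<notin> trans D) \<longrightarrow> flow_in D p t = 0 \<and> flow_out D t p = 0)
   \<and> (\<forall>t \<in> trans D. \<forall>n. lab D t = Some n \<longrightarrow> n \<in> sig_names E)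
   \<and> vars D \<subseteq> sig_attrs E
   \<and> (\<forall>t \<in> trans D. gvars (rguard D t) \<subseteq> sig_attrs E \<and> gvars (wguard D t) \<subseteq> sig_attrs E)"

abbreviation Var_r :: "('p, 't, 'n, 'a) dpn \<Rightarrow> 't \<Rightarrow> 'a set" where
  "Var_r D t \<equiv> gvars (rguard D t)"

abbreviation Var_w :: "('p, 't, 'n, 'a) dpn \<Rightarrow> 't \<Rightarrow> 'a set" where
  "Var_w D t \<equiv> gvars (wguard D t)"

text \<open>Markings are functions 'p => nat (0 outside P); valuations alpha : V -> R are
  functions 'a => real of which only the values on V matter; partial valuations
  beta : V ~> R are maps with domain contained in V.\<close>

definition enabled :: "('p, 't, 'n, 'a) dpn \<Rightarrow> ('p \<Rightarrow> nat) \<Rightarrow> ('a \<Rightarrow> real) \<Rightarrow> 't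
     \<Rightarrow> ('a \<Rightarrow> real option) \<Rightarrow> bool" where
  "enabled D M \<alpha> t \<beta> \<longleftrightarrow>
     t \<in> trans D \<and> dom \<beta> \<subseteq> vars D
   \<and> Var_r D t \<union> Var_w D t \<subseteq> dom \<beta>
   \<and> (\<forall>v \<in> Var_r D t. \<beta> v = Some (\<alpha> v))
   \<and> gsat \<beta> (rguard D t) \<and> gsat \<beta> (wguard D t)
   \<and> (\<forall>p \<in> places D. M p \<ge> flow_in D p t)"

definition fire_marking :: "('p, 't, 'n, 'a) dpn \<Rightarrow> ('p \<Rightarrow> nat) \<Rightarrow> 't \<Rightarrow> ('p \<Rightarrow> nat)" where
  "fire_marking D M t = (\<lambda>p. M p - flow_in D p t + flow_out D t p)"

definition fires :: "('p, 't, 'n, 'a) dpn \<Rightarrow> ('p \<Rightarrow> nat) \<times> ('a \<Rightarrow> real) \<Rightarrow> 't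
     \<Rightarrow> ('a \<Rightarrow> real option) \<Rightarrow> ('p \<Rightarrow> nat) \<times> ('a \<Rightarrow> real) \<Rightarrow> bool" where
  "fires D s t \<beta> s' \<longleftrightarrow> enabled D (fst s) (snd s) t \<beta>
     \<and> s' = (fire_marking D (fst s) t,
             \<lambda>v. if v \<in> Var_w D t then the (\<beta> v) else snd s v)"

definition reachable :: "('p, 't, 'n, 'a) dpn \<Rightarrow> ('p \<Rightarrow> nat) \<times> ('a \<Rightarrow> real)
     \<Rightarrow> (('p \<Rightarrow> nat) \<times> ('a \<Rightarrow> real)) set" where
  "reachable D s0 = {s. (\<lambda>x y. \<exists>t \<beta>. fires D x t \<beta> y)\<^sup>*\<^sup>* s0 s}"

definition safe :: "('p, 't, 'n, 'a) dpn \<Rightarrow> ('p \<Rightarrow> nat) \<times> ('a \<Rightarrow> real) \<Rightarrow> bool" where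
  "safe D s0 \<longleftrightarrow> (\<forall>s \<in> reachable D s0. \<forall>p \<in> places D. fst s p \<le> 1)"

definition well_formed :: "('n \<times> 'a set) set \<Rightarrow> ('p, 't, 'n, 'a) dpn \<Rightarrow> bool" where
  "well_formed E D \<longleftrightarrow>
     (\<forall>t \<in> trans D. \<forall>n A. lab D t = Some n \<longrightarrow> (n, A) \<in> E \<longrightarrow> Var_w D t = A)
   \<and> (\<forall>t \<in> trans D. lab D t = None \<longrightarrow> gvalid (wguard D t))"

definition is_dpnif :: "('n \<times> 'a set) set \<Rightarrow> ('p, 't, 'n, 'a) dpn \<Rightarrow> ('p \<Rightarrow> nat)
     \<Rightarrow> ('a \<Rightarrow> real) \<Rightarrow> ('p \<Rightarrow> nat) \<Rightarrow> bool" where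
  "is_dpnif E D M0 \<alpha>0 Mf \<longleftrightarrow> is_dpn E D
     \<and> (\<forall>p. p \<notin> places D \<longrightarrow> M0 p = 0 \<and> Mf p = 0)"

datatype region = RLess real | RPt real | RBetween real real | RGreater real

fun reg_set :: "region \<Rightarrow> real set" where
  "reg_set (RLess c) = {..<c}"
| "reg_set (RPt c) = {c}"
| "reg_set (RBetween a b) = {a<..<b}"
| "reg_set (RGreater c) = {c<..}"

definition partition_C :: "real set \<Rightarrow> region set" where
  "partition_C C = (if C = {} then {} else
      {RLess (Min C), RGreater (Max C)} \<union> RPt ` C
      \<union> {RBetween a b | a b. a \<in> C \<and> b \<in> C \<and> a < b \<and> (\<forall>c \<in> C. \<not> (a < c \<and> c < b))})"

definition region_of :: "real set \<Rightarrow> real \<Rightarrow> region" where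
  "region_of C x = (THE R. R \<in> partition_C C \<and> x \<in> reg_set R)"

definition tilde :: "('p, 't, 'n, 'a) dpn \<Rightarrow> real set \<Rightarrow> ('a \<Rightarrow> real) \<Rightarrow> ('a \<Rightarrow> region option)" where
  "tilde D C \<alpha> = (\<lambda>v. if v \<in> vars D then Some (region_of C (\<alpha> v)) else None)"

type_synonym ('p, 'a) astate = "('p \<Rightarrow> nat) \<times> ('a \<Rightarrow> region option)"

type_synonym ('q, 'n, 'a) gfa = "'q set \<times> 'q \<times> ('q \<times> ('n, 'a) cond \<times> 'q) set \<times> 'q set"

fun phi :: "'a \<Rightarrow> region \<Rightarrow> ('n, 'a) cond" where
  "phi v (RPt c) = CAtom v Eq c"
| "phi v (RBetween a b) = CConj (CAtom v Gt a) (CAtom v Lt b)"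
| "phi v (RLess c) = CAtom v Lt c"
| "phi v (RGreater c) = CAtom v Gt c"

text \<open>Conjunction of a list of conditions; None stands for the empty conjunction (top).\<close>
fun conjs :: "('n, 'a) cond list \<Rightarrow> ('n, 'a) cond option" where
  "conjs [] = None"
| "conjs [x] = Some x"
| "conjs (x # xs) = map_option (CConj x) (conjs xs)"

definition guard_of :: "('p, 't, 'n, 'a::linorder) dpn \<Rightarrow> 't \<Rightarrow> ('a \<Rightarrow> region option)
     \<Rightarrow> ('n, 'a) cond option" where
  "guard_of D t \<alpha>' = conjs (map (\<lambda>v. phi v (the (\<alpha>' v))) (sorted_list_of_set (Var_w D t)))"

fun label_and :: "'n option \<Rightarrow> ('n, 'a) cond option \<Rightarrow> ('n, 'a) cond" where
  "label_and a None = CLab a"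
| "label_and a (Some \<psi>) = CConj (CLab a) \<psi>"

definition induced_gfa :: "('p, 't, 'n, 'a::linorder) dpn \<Rightarrow> real set \<Rightarrow> ('p \<Rightarrow> nat)
     \<Rightarrow> ('a \<Rightarrow> real) \<Rightarrow> ('p \<Rightarrow> nat) \<Rightarrow> (('p, 'a) astate, 'n, 'a) gfa" where
  "induced_gfa D C M0 \<alpha>0 Mf =
    (let Q = {(M, tilde D C \<alpha>) | M \<alpha>. (M, \<alpha>) \<in> reachable D (M0, \<alpha>0)};
         R = {(q, lbl, q') | q lbl q'. q \<in> Q \<and> q' \<in> Q \<and>
               (\<exists>t \<beta> M \<alpha> M' \<alpha>'. fires D (M, \<alpha>) t \<beta> (M', \<alpha>')
                  \<and> q = (M, tilde D C \<alpha>) \<and> q' = (M', tilde D C \<alpha>')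
                  \<and> lbl = label_and (lab D t) (guard_of D t (tilde D C \<alpha>')))}
     in (Q, (M0, tilde D C \<alpha>0), R, {q \<in> Q. fst q = Mf}))"

definition enabled_reg :: "('p, 't, 'n, 'a) dpn \<Rightarrow> real set \<Rightarrow> ('p, 'a) astate
     \<Rightarrow> ('t \<times> ('a \<Rightarrow> region option)) set" where
  "enabled_reg D C s = {(t, \<beta>t). t \<in> trans D
      \<and> dom \<beta>t = Var_r D t \<union> Var_w D t
      \<and> (\<forall>v \<in> dom \<beta>t. the (\<beta>t v) \<in> partition_C C)
      \<and> (\<exists>\<alpha> \<beta>. (\<forall>v \<in> vars D. \<alpha> v \<in> reg_set (the (snd s v)))
              \<and> (\<forall>v \<in> dom \<beta>t. \<exists>x. \<beta> v = Some x \<and> x \<in> reg_set (the (\<beta>t v)))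
              \<and> enabled D (fst s) \<alpha> t \<beta>)}"

definition fire_reg :: "('p, 't, 'n, 'a) dpn \<Rightarrow> ('p, 'a) astate \<Rightarrow> 't
     \<Rightarrow> ('a \<Rightarrow> region option) \<Rightarrow> ('p, 'a) astate" where
  "fire_reg D s t \<beta>t = (fire_marking D (fst s) t,
      \<lambda>v. if v \<in> Var_w D t then \<beta>t v else snd s v)"

definition alg_label :: "('p, 't, 'n, 'a::linorder) dpn \<Rightarrow> 't \<Rightarrow> ('a \<Rightarrow> region option)
     \<Rightarrow> ('n, 'a) cond" where
  "alg_label D t \<alpha>' = (if wguard D t = GTrue then CLab (lab D t)
                        else label_and (lab D t) (guard_of D t \<alpha>'))"

text \<open>Configurations (Q, W, ->) of the while loop.\<close>
type_synonym ('p, 'n, 'a) config =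
  "('p, 'a) astate set \<times> ('p, 'a) astate set \<times> (('p, 'a) astate \<times> ('n, 'a) cond \<times> ('p, 'a) astate) set"

definition alg_q0 :: "('p, 't, 'n, 'a) dpn \<Rightarrow> ('p \<Rightarrow> nat) \<Rightarrow> ('a \<Rightarrow> real) \<Rightarrow> ('p, 'a) astate" where
  "alg_q0 D M0 \<alpha>0 = (M0, \<lambda>v. if v \<in> vars D then Some (RPt (\<alpha>0 v)) else None)"

definition alg_init :: "('p, 't, 'n, 'a) dpn \<Rightarrow> ('p \<Rightarrow> nat) \<Rightarrow> ('a \<Rightarrow> real) \<Rightarrow> ('p, 'n, 'a) config" where
  "alg_init D M0 \<alpha>0 = ({alg_q0 D M0 \<alpha>0}, {alg_q0 D M0 \<alpha>0}, {})"

text \<open>One iteration of the while loop: some state s is selected and removed from W,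
  and the for-loop over enabled(s) is executed (its result does not depend on the order).\<close>
definition alg_step :: "('p, 't, 'n, 'a::linorder) dpn \<Rightarrow> real set
     \<Rightarrow> ('p, 'n, 'a) config \<Rightarrow> ('p, 'n, 'a) config \<Rightarrow> bool" where
  "alg_step D C c c' \<longleftrightarrow> (case c of (Q, W, R) \<Rightarrow>
     (\<exists>s \<in> W.
        let succs = {fire_reg D s t \<beta>t | t \<beta>t. (t, \<beta>t) \<in> enabled_reg D C s};
            edges = {(s, alg_label D t (snd (fire_reg D s t \<beta>t)), fire_reg D s t \<beta>t)
                      | t \<beta>t. (t, \<beta>t) \<in> enabled_reg D C s}
        in c' = (Q \<union> succs, (W - {s}) \<union> (succs - Q), R \<union> edges)))"

definition alg_output :: "('p, 't, 'n, 'a) dpn \<Rightarrow> ('p \<Rightarrow> nat) \<Rightarrow> ('a \<Rightarrow> real) \<Rightarrow> ('p \<Rightarrow> nat)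
     \<Rightarrow> ('p, 'n, 'a) config \<Rightarrow> (('p, 'a) astate, 'n, 'a) gfa" where
  "alg_output D M0 \<alpha>0 Mf c = (case c of (Q, W, R) \<Rightarrow> (Q, alg_q0 D M0 \<alpha>0, R, {q \<in> Q. fst q = Mf}))"

end

theory Submission
  imports Defs
begin

lemma part_cover:
  assumes "finite C" "C \<noteq> {}"
  shows "\<exists>R\<in>partition_C C. x \<in> reg_set R"
proof -
  have P: "partition_C C = {RLess (Min C), RGreater (Max C)} \<union> RPt ` C
      \<union> {RBetween a b | a b. a \<in> C \<and> b \<in> C \<and> a < b \<and> (\<forall>c \<in> C. \<not> (a < c \<and> c < b))}"
    using assms by (simp add: partition_C_def)
  show ?thesis
  proof (cases "x < Min C")
    case True then show ?thesis by (auto simp: P)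
  next
    case n1: False
    show ?thesis
    proof (cases "x > Max C")
      case True then show ?thesis by (auto simp: P)
    next
      case n2: False
      show ?thesis
      proof (cases "x \<in> C")
        case True
        then have "RPt x \<in> partition_C C" using P by auto
        then show ?thesis by force
      next
        case n3: False
        define A where "A = {c\<in>C. c < x}"
        define B where "B = {c\<in>C. x < c}"
        have "Min C \<in> C" using assms by simp
        with n1 n3 have "Min C < x" by (cases "Min C = x") auto
        with \<open>Min C \<in> C\<close> have "Min C \<in> A" unfolding A_def by auto
        hence An: "A \<noteq> {}" by auto
        have "Max C \<in> C" using assms by simp
        with n2 n3 have "Max C > x" by (cases "Max C = x") auto
        with \<open>Max C \<in> C\<close> have "Max C \<in> B" unfolding B_def by auto
        hence Bn: "B \<noteq> {}" by auto
        have fA: "finite A" "finite B" using assms unfolding A_def B_def by auto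
        define a where "a = Max A"
        define b where "b = Min B"
        have aA: "a \<in> A" using An fA a_def Max_in by blast
        have bB: "b \<in> B" using Bn fA b_def Min_in by blast
        have nc: "\<forall>c\<in>C. \<not> (a < c \<and> c < b)"
        proof (intro ballI notI)
          fix c assume c: "c \<in> C" "a < c \<and> c < b"
          show False
          proof (cases "c < x")
            case True then have "c \<in> A" using c unfolding A_def by auto
            then have "c \<le> a" using fA a_def by auto
            then show False using c by auto
          next
            case False then have "c > x" using c n3 by (cases "c = x") auto
            then have "c \<in> B" using c unfolding B_def by auto
            then have "b \<le> c" using fA b_def by auto
            then show False using c by auto
          qed
        qed
        have "RBetween a b \<in> partition_C C" using aA bB nc unfolding P A_def B_def by auto
        moreover have "x \<in> reg_set (RBetween a b)" using aA bB unfolding A_def B_def by auto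
        ultimately show ?thesis by blast
      qed
    qed
  qed
qed

lemma part_unique:
  assumes "finite C" "R1 \<in> partition_C C" "R2 \<in> partition_C C" "x \<in> reg_set R1" "x \<in> reg_set R2"
  shows "R1 = R2"
proof -
  have ne: "C \<noteq> {}" using assms(2) by (auto simp: partition_C_def split: if_splits)
  have P: "partition_C C = {RLess (Min C), RGreater (Max C)} \<union> RPt ` C
      \<union> {RBetween a b | a b. a \<in> C \<and> b \<in> C \<and> a < b \<and> (\<forall>c \<in> C. \<not> (a < c \<and> c < b))}"
    using ne by (simp add: partition_C_def)
  have mn: "\<And>c. c \<in> C \<Longrightarrow> Min C \<le> c" "\<And>c. c \<in> C \<Longrightarrow> c \<le> Max C" using assms(1) by auto
  have mM: "Min C \<le> Max C" using assms(1) ne by simp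
  have btw: "\<And>a b a' b'. a \<in> C \<Longrightarrow> b \<in> C \<Longrightarrow> a' \<in> C \<Longrightarrow> b' \<in> C \<Longrightarrow>
     \<forall>c \<in> C. \<not> (a < c \<and> c < b) \<Longrightarrow> \<forall>c \<in> C. \<not> (a' < c \<and> c < b') \<Longrightarrow>
     a < x \<Longrightarrow> x < b \<Longrightarrow> a' < x \<Longrightarrow> x < b' \<Longrightarrow> a = a' \<and> b = b'"
  proof -
    fix a b a' b' assume h: "a \<in> C" "b \<in> C" "a' \<in> C" "b' \<in> C"
     "\<forall>c \<in> C. \<not> (a < c \<and> c < b)" "\<forall>c \<in> C. \<not> (a' < c \<and> c < b')"
     "a < x" "x < b" "a' < x" "x < b'"
    have "\<not> a < a'" using h by force
    moreover have "\<not> a' < a" using h by force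
    moreover have "\<not> b < b'" using h by force
    moreover have "\<not> b' < b" using h by force
    ultimately show "a = a' \<and> b = b'" by auto
  qed
  show ?thesis using assms(2-5) unfolding P
    apply auto
    using mn btw mM by force+
qed

lemma region_of_eq:
  assumes "finite C" "R \<in> partition_C C" "x \<in> reg_set R"
  shows "region_of C x = R"
  unfolding region_of_def
  using assms part_unique by (intro the_equality) blast+

lemma region_of_in:
  assumes "finite C" "C \<noteq> {}"
  shows "region_of C x \<in> partition_C C \<and> x \<in> reg_set (region_of C x)"
proof -
  obtain R where "R \<in> partition_C C" "x \<in> reg_set R" using part_cover assms by blast
  then show ?thesis using region_of_eq assms by metis
qed

lemma reg_cmp:
  assumes "finite C" "R \<in> partition_C C" "x \<in> reg_set R" "y \<in> reg_set R" "c \<in> C"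
  shows "cmp_holds op x c = cmp_holds op y c"
proof -
  have ne: "C \<noteq> {}" using assms(2) by (auto simp: partition_C_def split: if_splits)
  have P: "partition_C C = {RLess (Min C), RGreater (Max C)} \<union> RPt ` C
      \<union> {RBetween a b | a b. a \<in> C \<and> b \<in> C \<and> a < b \<and> (\<forall>c \<in> C. \<not> (a < c \<and> c < b))}"
    using ne by (simp add: partition_C_def)
  have mn: "Min C \<le> c" "c \<le> Max C" using assms by auto
  have "(x < c \<longleftrightarrow> y < c) \<and> (x = c \<longleftrightarrow> y = c) \<and> (x > c \<longleftrightarrow> y > c)"
    using assms(2-5) mn unfolding P
    by auto
  then show ?thesis by (cases op) auto
qed

definition eqv :: "real set \<Rightarrow> real \<Rightarrow> real \<Rightarrow> bool" where
  "eqv C x y \<longleftrightarrow> (\<forall>c\<in>C. \<forall>op. cmp_holds op x c = cmp_holds op y c)"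

lemma gsat_eqv:
  assumes "gconsts g \<subseteq> C" "\<forall>a\<in>gvars g. rel_option (eqv C) (\<beta> a) (\<beta>' a)"
  shows "gsat \<beta> g = gsat \<beta>' g"
  using assms
proof (induction g)
  case (GAtom a op c)
  then show ?case by (auto simp: eqv_def option.rel_sel split: option.splits)
qed auto


lemma eqv_refl: "eqv C x x" by (simp add: eqv_def)

lemma eqv_region:
  assumes "finite C" "C \<noteq> {}" "region_of C x = region_of C y"
  shows "eqv C x y"
  unfolding eqv_def
proof (intro ballI allI)
  fix c op assume "c \<in> C"
  then show "cmp_holds op x c = cmp_holds op y c"
    using reg_cmp[OF assms(1) _ _ _ \<open>c \<in> C\<close>] region_of_in[OF assms(1,2)] assms(3) by metis
qed

lemma finite_partition:
  assumes "finite C" shows "finite (partition_C C)"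
proof -
  let ?B = "{RBetween a b | a b. a \<in> C \<and> b \<in> C \<and> a < b \<and> (\<forall>c \<in> C. \<not> (a < c \<and> c < b))}"
  have "?B \<subseteq> (\<lambda>(a,b). RBetween a b) ` (C \<times> C)" by auto
  moreover have "finite ((\<lambda>(a,b). RBetween a b) ` (C \<times> C))" using assms by simp
  ultimately have fB: "finite ?B" by (rule finite_subset)
  show ?thesis using assms fB unfolding partition_C_def by simp
qed

locale setting =
  fixes D :: "('p, 't, 'n, 'a::linorder) dpn" and C :: "real set"
  assumes finC: "finite C"
    and gcC: "\<forall>t \<in> trans D. gconsts (rguard D t) \<union> gconsts (wguard D t) \<subseteq> C"
    and Cne: "vars D \<noteq> {} \<Longrightarrow> C \<noteq> {}"
begin

lemma tilde_in:
  "v \<in> vars D \<Longrightarrow> tilde D C \<alpha> v = Some (region_of C (\<alpha> v))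
     \<and> region_of C (\<alpha> v) \<in> partition_C C \<and> \<alpha> v \<in> reg_set (region_of C (\<alpha> v))"
  using region_of_in[OF finC Cne] by (auto simp: tilde_def)

lemma label_eq:
  "alg_label D t \<alpha>' = label_and (lab D t) (guard_of D t \<alpha>')"
  by (simp add: alg_label_def guard_of_def)

lemma L1:
  assumes "(t, \<beta>t) \<in> enabled_reg D C (M, tilde D C \<alpha>)"
  shows "\<exists>\<beta> \<alpha>'. fires D (M, \<alpha>) t \<beta> (fire_marking D M t, \<alpha>')
            \<and> fire_reg D (M, tilde D C \<alpha>) t \<beta>t = (fire_marking D M t, tilde D C \<alpha>')"
proof -
  from assms obtain \<alpha>1 \<beta>1 where t: "t \<in> trans D"
    and dom: "dom \<beta>t = Var_r D t \<union> Var_w D t"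
    and part: "\<forall>v \<in> dom \<beta>t. the (\<beta>t v) \<in> partition_C C"
    and a1: "\<forall>v \<in> vars D. \<alpha>1 v \<in> reg_set (the (tilde D C \<alpha> v))"
    and b1: "\<forall>v \<in> dom \<beta>t. \<exists>x. \<beta>1 v = Some x \<and> x \<in> reg_set (the (\<beta>t v))"
    and en: "enabled D M \<alpha>1 t \<beta>1"
    unfolding enabled_reg_def by auto
  have en': "dom \<beta>1 \<subseteq> vars D" "Var_r D t \<union> Var_w D t \<subseteq> dom \<beta>1"
     "\<forall>v \<in> Var_r D t. \<beta>1 v = Some (\<alpha>1 v)" "gsat \<beta>1 (rguard D t)" "gsat \<beta>1 (wguard D t)"
     "\<forall>p \<in> places D. M p \<ge> flow_in D p t"
    using en unfolding enabled_def by auto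
  have reg1: "region_of C (\<alpha>1 v) = region_of C (\<alpha> v)" if "v \<in> vars D" for v
  proof -
    have "the (tilde D C \<alpha> v) = region_of C (\<alpha> v)" "region_of C (\<alpha> v) \<in> partition_C C"
      using tilde_in[OF that, of \<alpha>] by auto
    moreover have "\<alpha>1 v \<in> reg_set (the (tilde D C \<alpha> v))" using a1 that by blast
    ultimately show ?thesis using region_of_eq[OF finC] by metis
  qed
  define \<beta> where "\<beta> = (\<lambda>v. if v \<in> Var_r D t then Some (\<alpha> v) else \<beta>1 v)"
  define \<alpha>' where "\<alpha>' = (\<lambda>v. if v \<in> Var_w D t then the (\<beta> v) else \<alpha> v)"
  have rel: "rel_option (eqv C) (\<beta> v) (\<beta>1 v)" for v
  proof (cases "v \<in> Var_r D t")
    case True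
    then have "v \<in> vars D" using en' by auto
    then have ne: "vars D \<noteq> {}" by auto
    have "eqv C (\<alpha> v) (\<alpha>1 v)" using eqv_region[OF finC Cne[OF ne]] reg1[OF \<open>v \<in> vars D\<close>] by simp
    then show ?thesis using True en' by (simp add: \<beta>_def)
  next
    case False
    then show ?thesis by (cases "\<beta>1 v") (auto simp: \<beta>_def eqv_refl)
  qed
  have dom\<beta>: "dom \<beta> = dom \<beta>1" using en' unfolding \<beta>_def by auto
  have gs: "gsat \<beta> (rguard D t)" "gsat \<beta> (wguard D t)"
  proof -
    have c: "gconsts (rguard D t) \<subseteq> C" "gconsts (wguard D t) \<subseteq> C" using gcC t by auto
    show "gsat \<beta> (rguard D t)" using gsat_eqv[OF c(1)] rel en'(4) by blast
    show "gsat \<beta> (wguard D t)" using gsat_eqv[OF c(2)] rel en'(5) by blast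
  qed
  have enab: "enabled D M \<alpha> t \<beta>"
    unfolding enabled_def using t dom\<beta> en' gs by (auto simp: \<beta>_def)
  have fi: "fires D (M, \<alpha>) t \<beta> (fire_marking D M t, \<alpha>')"
    unfolding fires_def fst_conv snd_conv \<alpha>'_def using enab by simp
  have "(\<lambda>v. if v \<in> Var_w D t then \<beta>t v else tilde D C \<alpha> v) = tilde D C \<alpha>'"
  proof
    fix v
    show "(if v \<in> Var_w D t then \<beta>t v else tilde D C \<alpha> v) = tilde D C \<alpha>' v"
    proof (cases "v \<in> Var_w D t")
      case True
      then have v: "v \<in> vars D" "v \<in> dom \<beta>t" using en' dom by auto
      then obtain R where R: "\<beta>t v = Some R" by auto
      obtain x where x: "\<beta>1 v = Some x" "x \<in> reg_set R" using b1 v R by force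
      have RP: "R \<in> partition_C C" using part v R by force
      have rx: "region_of C x = R" using region_of_eq[OF finC RP x(2)] .
      have "region_of C (the (\<beta> v)) = R"
      proof (cases "v \<in> Var_r D t")
        case True
        then have "x = \<alpha>1 v" using en' x by auto
        then show ?thesis using True rx reg1[OF v(1)] by (simp add: \<beta>_def)
      next
        case False then show ?thesis using x rx by (simp add: \<beta>_def)
      qed
      then show ?thesis using True R v by (simp add: tilde_def \<alpha>'_def)
    next
      case False
      then show ?thesis by (simp add: tilde_def \<alpha>'_def)
    qed
  qed
  then have eq: "(\<lambda>v. if v \<in> Var_w D t then \<beta>t v else tilde D C \<alpha> v) = tilde D C \<alpha>'" .
  have "fire_reg D (M, tilde D C \<alpha>) t \<beta>t = (fire_marking D M t, tilde D C \<alpha>')"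
    unfolding fire_reg_def fst_conv snd_conv eq by (rule refl)
  with fi show ?thesis by blast
qed

lemma L2:
  assumes "fires D (M, \<alpha>) t \<beta> (M', \<alpha>')"
  shows "\<exists>\<beta>t. (t, \<beta>t) \<in> enabled_reg D C (M, tilde D C \<alpha>)
            \<and> fire_reg D (M, tilde D C \<alpha>) t \<beta>t = (M', tilde D C \<alpha>')"
proof -
  have en: "enabled D M \<alpha> t \<beta>" and M': "M' = fire_marking D M t"
    and a': "\<alpha>' = (\<lambda>v. if v \<in> Var_w D t then the (\<beta> v) else \<alpha> v)"
    using assms unfolding fires_def by auto
  have en': "t \<in> trans D" "dom \<beta> \<subseteq> vars D" "Var_r D t \<union> Var_w D t \<subseteq> dom \<beta>"
    using en unfolding enabled_def by auto
  define \<beta>t where "\<beta>t = (\<lambda>v. if v \<in> Var_r D t \<union> Var_w D t then Some (region_of C (the (\<beta> v))) else None)"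
  have "(t, \<beta>t) \<in> enabled_reg D C (M, tilde D C \<alpha>)"
    unfolding enabled_reg_def
  proof (simp, intro conjI)
    show "t \<in> trans D" by fact
    show "dom \<beta>t = Var_r D t \<union> Var_w D t" by (auto simp: \<beta>t_def split: if_splits)
    show "\<forall>v\<in>dom \<beta>t. the (\<beta>t v) \<in> partition_C C"
    proof
      fix v assume "v \<in> dom \<beta>t"
      then have "v \<in> Var_r D t \<union> Var_w D t" by (auto simp: \<beta>t_def split: if_splits)
      then have "v \<in> vars D" using en' by auto
      then show "the (\<beta>t v) \<in> partition_C C"
        using region_of_in[OF finC Cne] \<open>v \<in> Var_r D t \<union> Var_w D t\<close> by (auto simp: \<beta>t_def)
    qed
    show "\<exists>\<alpha>'. (\<forall>v\<in>vars D. \<alpha>' v \<in> reg_set (the (tilde D C \<alpha> v))) \<and>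
        (\<exists>\<beta>'. (\<forall>v\<in>dom \<beta>t. \<exists>x. \<beta>' v = Some x \<and> x \<in> reg_set (the (\<beta>t v))) \<and> enabled D M \<alpha>' t \<beta>')"
    proof (intro exI conjI)
      show "\<forall>v\<in>vars D. \<alpha> v \<in> reg_set (the (tilde D C \<alpha> v))" using tilde_in by auto
      show "enabled D M \<alpha> t \<beta>" by fact
      show "\<forall>v\<in>dom \<beta>t. \<exists>x. \<beta> v = Some x \<and> x \<in> reg_set (the (\<beta>t v))"
      proof
        fix v assume "v \<in> dom \<beta>t"
        then have v: "v \<in> Var_r D t \<union> Var_w D t" by (auto simp: \<beta>t_def split: if_splits)
        then have "v \<in> vars D" using en' by auto
        obtain x where "\<beta> v = Some x" using v en' by auto
        then show "\<exists>x. \<beta> v = Some x \<and> x \<in> reg_set (the (\<beta>t v))"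
          using region_of_in[OF finC Cne] \<open>v \<in> vars D\<close> v by (auto simp: \<beta>t_def)
      qed
    qed
  qed
  moreover have "fire_reg D (M, tilde D C \<alpha>) t \<beta>t = (M', tilde D C \<alpha>')"
  proof -
    have eq: "(\<lambda>v. if v \<in> Var_w D t then \<beta>t v else tilde D C \<alpha> v) = tilde D C \<alpha>'"
    proof
      fix v
      show "(if v \<in> Var_w D t then \<beta>t v else tilde D C \<alpha> v) = tilde D C \<alpha>' v"
      proof (cases "v \<in> Var_w D t")
        case True
        then have "v \<in> vars D" using en' by auto
        then show ?thesis using True unfolding a' tilde_def \<beta>t_def by simp
      next
        case False
        then show ?thesis unfolding a' tilde_def by simp
      qed
    qed
    show ?thesis unfolding fire_reg_def M' fst_conv snd_conv eq by (rule refl)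
  qed
  ultimately show ?thesis by blast
qed

end


locale setting2 = setting D C for D :: "('p, 't, 'n, 'a::linorder) dpn" and C +
  fixes M0 :: "'p \<Rightarrow> nat" and \<alpha>0 :: "'a \<Rightarrow> real"
  assumes a0C: "\<forall>v\<in>vars D. \<alpha>0 v \<in> C"
    and safeD: "safe D (M0, \<alpha>0)"
    and finP: "finite (places D)" and finV: "finite (vars D)"
    and M0z: "\<forall>p. p \<notin> places D \<longrightarrow> M0 p = 0"
    and flowz: "\<forall>p t. p \<notin> places D \<longrightarrow> flow_in D p t = 0 \<and> flow_out D t p = 0"
begin

definition U where "U = {(M, tilde D C \<alpha>) | M \<alpha>. (M, \<alpha>) \<in> reachable D (M0, \<alpha>0)}"

definition Rind where "Rind = {(q, lbl, q') | q lbl q'. q \<in> U \<and> q' \<in> U \<and>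
               (\<exists>t \<beta> M \<alpha> M' \<alpha>'. fires D (M, \<alpha>) t \<beta> (M', \<alpha>')
                  \<and> q = (M, tilde D C \<alpha>) \<and> q' = (M', tilde D C \<alpha>')
                  \<and> lbl = label_and (lab D t) (guard_of D t (tilde D C \<alpha>')))}"

lemma induced_eq: "induced_gfa D C M0 \<alpha>0 Mf = (U, (M0, tilde D C \<alpha>0), Rind, {q \<in> U. fst q = Mf})"
  by (simp add: induced_gfa_def U_def Rind_def Let_def)

lemma q0_eq: "alg_q0 D M0 \<alpha>0 = (M0, tilde D C \<alpha>0)"
proof -
  have "(\<lambda>v. if v \<in> vars D then Some (RPt (\<alpha>0 v)) else None) = tilde D C \<alpha>0"
  proof
    fix v show "(if v \<in> vars D then Some (RPt (\<alpha>0 v)) else None) = tilde D C \<alpha>0 v"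
    proof (cases "v \<in> vars D")
      case True
      then have ne: "C \<noteq> {}" using a0C by auto
      have "RPt (\<alpha>0 v) \<in> partition_C C" using ne True a0C by (simp add: partition_C_def)
      then have "region_of C (\<alpha>0 v) = RPt (\<alpha>0 v)" using region_of_eq[OF finC] by simp
      then show ?thesis using True by (simp add: tilde_def)
    qed (simp add: tilde_def)
  qed
  then show ?thesis unfolding alg_q0_def by simp
qed

lemma reach0: "s0 \<in> reachable D s0" by (simp add: reachable_def)

lemma reach_step: "s \<in> reachable D s0 \<Longrightarrow> fires D s t \<beta> s' \<Longrightarrow> s' \<in> reachable D s0"
  unfolding reachable_def by (auto intro: rtranclp.rtrancl_into_rtrancl)

lemma reach_zero:
  assumes "s \<in> reachable D (M0, \<alpha>0)" "p \<notin> places D"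
  shows "fst s p = 0"
proof -
  have "(\<lambda>x y. \<exists>t \<beta>. fires D x t \<beta> y)\<^sup>*\<^sup>* (M0, \<alpha>0) s" using assms(1) by (simp add: reachable_def)
  then show ?thesis
  proof (induction rule: rtranclp_induct)
    case base then show ?case using M0z assms(2) by simp
  next
    case (step y z)
    then obtain t \<beta> where "fires D y t \<beta> z" by blast
    then have "fst z = fire_marking D (fst y) t" by (simp add: fires_def)
    then show ?case using step.IH flowz assms(2) by (simp add: fire_marking_def)
  qed
qed

lemma finite_U: "finite U"
proof -
  let ?Mk = "{f. \<forall>x. (x \<in> places D \<longrightarrow> f x \<in> {0,1::nat}) \<and> (x \<notin> places D \<longrightarrow> f x = 0)}"
  let ?Fk = "{f. \<forall>x. (x \<in> vars D \<longrightarrow> f x \<in> Some ` partition_C C) \<and> (x \<notin> vars D \<longrightarrow> f x = None)}"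
  have f1: "finite ?Mk" using finite_set_of_finite_funs[OF finP, of "{0,1::nat}" 0] by simp
  have f2: "finite ?Fk" using finite_set_of_finite_funs[OF finV, of "Some ` partition_C C" None]
      finite_partition[OF finC] by simp
  have "U \<subseteq> ?Mk \<times> ?Fk"
  proof
    fix q assume "q \<in> U"
    then obtain M \<alpha> where q: "q = (M, tilde D C \<alpha>)" and r: "(M, \<alpha>) \<in> reachable D (M0, \<alpha>0)"
      unfolding U_def by blast
    have "M \<in> ?Mk"
    proof (simp, intro allI conjI impI)
      fix x assume "x \<in> places D"
      then have "M x \<le> 1" using safeD r unfolding safe_def by force
      then show "M x = 0 \<or> M x = Suc 0" by auto
    next
      fix x assume "x \<notin> places D"
      then show "M x = 0" using reach_zero[OF r] by simp
    qed
    moreover have "tilde D C \<alpha> \<in> ?Fk"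
      using tilde_in by (auto simp: tilde_def)
    ultimately show "q \<in> ?Mk \<times> ?Fk" using q by simp
  qed
  then show ?thesis using f1 f2 finite_subset by blast
qed

lemma Rind_I:
  assumes "(M, tilde D C \<alpha>) \<in> U" "(M', tilde D C \<alpha>') \<in> U" "fires D (M, \<alpha>) t \<beta> (M', \<alpha>')"
  shows "((M, tilde D C \<alpha>), label_and (lab D t) (guard_of D t (tilde D C \<alpha>')), (M', tilde D C \<alpha>')) \<in> Rind"
proof -
  have ex: "\<exists>t0 \<beta>0 M0' \<alpha>0' M1 \<alpha>1. fires D (M0', \<alpha>0') t0 \<beta>0 (M1, \<alpha>1)
                  \<and> (M, tilde D C \<alpha>) = (M0', tilde D C \<alpha>0') \<and> (M', tilde D C \<alpha>') = (M1, tilde D C \<alpha>1)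
                  \<and> label_and (lab D t) (guard_of D t (tilde D C \<alpha>')) = label_and (lab D t0) (guard_of D t0 (tilde D C \<alpha>1))"
    using assms(3) by blast
  show ?thesis unfolding Rind_def mem_Collect_eq using assms(1,2) ex by blast
qed

lemma U_I: "(M, \<alpha>) \<in> reachable D (M0, \<alpha>0) \<Longrightarrow> (M, tilde D C \<alpha>) \<in> U"
  unfolding U_def by blast

definition succs where "succs s = {fire_reg D s t \<beta>t | t \<beta>t. (t, \<beta>t) \<in> enabled_reg D C s}"
definition edges where "edges s = {(s, alg_label D t (snd (fire_reg D s t \<beta>t)), fire_reg D s t \<beta>t)
                      | t \<beta>t. (t, \<beta>t) \<in> enabled_reg D C s}"

lemma step_iff: "alg_step D C (Q, W, R) c' \<longleftrightarrow>
   (\<exists>s\<in>W. c' = (Q \<union> succs s, (W - {s}) \<union> (succs s - Q), R \<union> edges s))"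
  by (simp add: alg_step_def Let_def succs_def edges_def)

lemma succs_U: "s \<in> U \<Longrightarrow> succs s \<subseteq> U"
proof
  fix x assume "s \<in> U" "x \<in> succs s"
  then obtain M \<alpha> where s: "s = (M, tilde D C \<alpha>)" and r: "(M, \<alpha>) \<in> reachable D (M0, \<alpha>0)"
    unfolding U_def by blast
  obtain t \<beta>t where x: "x = fire_reg D s t \<beta>t" and e: "(t, \<beta>t) \<in> enabled_reg D C s"
    using \<open>x \<in> succs s\<close> unfolding succs_def by blast
  obtain \<beta> \<alpha>' where f: "fires D (M, \<alpha>) t \<beta> (fire_marking D M t, \<alpha>')"
     and fr: "fire_reg D (M, tilde D C \<alpha>) t \<beta>t = (fire_marking D M t, tilde D C \<alpha>')"
    using L1 e s by blast
  have "(fire_marking D M t, \<alpha>') \<in> reachable D (M0, \<alpha>0)" using reach_step[OF r f] .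
  then show "x \<in> U" unfolding U_def x s fr by blast
qed

lemma edges_R: "s \<in> U \<Longrightarrow> edges s \<subseteq> Rind"
proof
  fix e assume sU: "s \<in> U" and "e \<in> edges s"
  then obtain M \<alpha> where s: "s = (M, tilde D C \<alpha>)" and r: "(M, \<alpha>) \<in> reachable D (M0, \<alpha>0)"
    unfolding U_def by blast
  obtain t \<beta>t where x: "e = (s, alg_label D t (snd (fire_reg D s t \<beta>t)), fire_reg D s t \<beta>t)"
     and en: "(t, \<beta>t) \<in> enabled_reg D C s"
    using \<open>e \<in> edges s\<close> unfolding edges_def by blast
  obtain \<beta> \<alpha>' where f: "fires D (M, \<alpha>) t \<beta> (fire_marking D M t, \<alpha>')"
     and fr: "fire_reg D (M, tilde D C \<alpha>) t \<beta>t = (fire_marking D M t, tilde D C \<alpha>')"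
    using L1 en s by blast
  have "(fire_marking D M t, \<alpha>') \<in> reachable D (M0, \<alpha>0)" using reach_step[OF r f] .
  then have tU: "(fire_marking D M t, tilde D C \<alpha>') \<in> U" unfolding U_def by blast
  have "e = ((M, tilde D C \<alpha>), label_and (lab D t) (guard_of D t (tilde D C \<alpha>')), (fire_marking D M t, tilde D C \<alpha>'))"
    unfolding x s fr label_eq by simp
  then show "e \<in> Rind" using Rind_I[OF _ tU f] sU s by simp
qed

lemma R_edges: "e \<in> Rind \<Longrightarrow> fst e = s \<Longrightarrow> e \<in> edges s"
proof -
  assume "e \<in> Rind" "fst e = s"
  then obtain lbl q' t \<beta> M \<alpha> M' \<alpha>' where e: "e = (s, lbl, q')"
    and f: "fires D (M, \<alpha>) t \<beta> (M', \<alpha>')" and s: "s = (M, tilde D C \<alpha>)"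
    and q': "q' = (M', tilde D C \<alpha>')" and l: "lbl = label_and (lab D t) (guard_of D t (tilde D C \<alpha>'))"
    unfolding Rind_def by auto
  obtain \<beta>t where en: "(t, \<beta>t) \<in> enabled_reg D C (M, tilde D C \<alpha>)"
    and fr: "fire_reg D (M, tilde D C \<alpha>) t \<beta>t = (M', tilde D C \<alpha>')"
    using L2[OF f] by blast
  have "e = (s, alg_label D t (snd (fire_reg D s t \<beta>t)), fire_reg D s t \<beta>t)"
    unfolding e s fr q' l label_eq by simp
  then show "e \<in> edges s" unfolding edges_def using en s by blast
qed

definition Inv :: "('p, 'n, 'a) config \<Rightarrow> bool" where
  "Inv c \<longleftrightarrow> (case c of (Q, W, R) \<Rightarrow> alg_q0 D M0 \<alpha>0 \<in> Q \<and> W \<subseteq> Q \<and> Q \<subseteq> U \<and> R \<subseteq> Rind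
     \<and> (\<forall>e\<in>R. snd (snd e) \<in> Q) \<and> (\<forall>e\<in>Rind. fst e \<in> Q \<and> fst e \<notin> W \<longrightarrow> e \<in> R))"

definition meas :: "('p, 'n, 'a) config \<Rightarrow> nat" where
  "meas c = (case c of (Q, W, R) \<Rightarrow> card (U - Q) * (card U + 1) + card W)"

lemma arith_aux:
  fixes a b w N w' :: nat
  assumes "a < b" "w \<le> N"
  shows "a * (N + 1) + w < b * (N + 1) + w'"
proof -
  have "(a + 1) * (N + 1) \<le> b * (N + 1)" using assms(1) by (intro mult_le_mono1) simp
  moreover have "a * (N + 1) + w < (a + 1) * (N + 1)" using assms(2) by simp
  ultimately show ?thesis by linarith
qed

lemma Inv_init: "Inv (alg_init D M0 \<alpha>0)"
proof -
  have "alg_q0 D M0 \<alpha>0 \<in> U" unfolding q0_eq U_def using reach0 by blast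
  then show ?thesis unfolding Inv_def alg_init_def by auto
qed

lemma Inv_step:
  assumes "Inv c" "alg_step D C c c'"
  shows "Inv c' \<and> meas c' < meas c"
proof -
  obtain Q W R where c: "c = (Q, W, R)" by (cases c) auto
  obtain s where sW: "s \<in> W" and c': "c' = (Q \<union> succs s, (W - {s}) \<union> (succs s - Q), R \<union> edges s)"
    using assms(2) unfolding c step_iff by blast
  have I: "alg_q0 D M0 \<alpha>0 \<in> Q" "W \<subseteq> Q" "Q \<subseteq> U" "R \<subseteq> Rind" "\<forall>e\<in>R. snd (snd e) \<in> Q"
     "\<forall>e\<in>Rind. fst e \<in> Q \<and> fst e \<notin> W \<longrightarrow> e \<in> R"
    using assms(1) unfolding Inv_def c by auto
  have sU: "s \<in> U" using sW I by auto
  have SU: "succs s \<subseteq> U" using succs_U[OF sU] .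
  have ER: "edges s \<subseteq> Rind" using edges_R[OF sU] .
  have ET: "\<forall>e\<in>edges s. snd (snd e) \<in> succs s" unfolding edges_def succs_def by auto
  have "Inv c'"
    unfolding Inv_def c'
  proof (simp only: prod.case, intro conjI)
    show "alg_q0 D M0 \<alpha>0 \<in> Q \<union> succs s" using I by auto
    show "W - {s} \<union> (succs s - Q) \<subseteq> Q \<union> succs s" using I by auto
    show "Q \<union> succs s \<subseteq> U" using I SU by auto
    show "R \<union> edges s \<subseteq> Rind" using I ER by auto
    show "\<forall>e\<in>R \<union> edges s. snd (snd e) \<in> Q \<union> succs s" using I ET by auto
    show "\<forall>e\<in>Rind. fst e \<in> Q \<union> succs s \<and> fst e \<notin> W - {s} \<union> (succs s - Q) \<longrightarrow> e \<in> R \<union> edges s"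
    proof (intro ballI impI)
      fix e assume e: "e \<in> Rind" "fst e \<in> Q \<union> succs s \<and> fst e \<notin> W - {s} \<union> (succs s - Q)"
      show "e \<in> R \<union> edges s"
      proof (cases "fst e = s")
        case True then show ?thesis using R_edges[OF e(1)] by auto
      next
        case False
        then have "fst e \<in> Q" "fst e \<notin> W" using e(2) by auto
        then show ?thesis using I(6) e(1) by auto
      qed
    qed
  qed
  moreover have "meas c' < meas c"
  proof (cases "succs s \<subseteq> Q")
    case True
    have e1: "succs s - Q = {}" using True by auto
    have e2: "Q \<union> succs s = Q" using True by auto
    have c'': "c' = (Q, W - {s}, R \<union> edges s)" using c' e1 e2 by simp
    have "W \<subseteq> U" using I by auto
    then have fW: "finite W" using finite_U by (rule finite_subset)
    have "card (W - {s}) < card W" by (rule card_Diff1_less[OF fW sW])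
    then show ?thesis unfolding c'' c meas_def by simp
  next
    case False
    then obtain x where x: "x \<in> succs s" "x \<notin> Q" by auto
    have xU: "x \<in> U" using x SU by auto
    have sub: "U - (Q \<union> succs s) \<subset> U - Q" using x xU by auto
    have fUQ: "finite (U - Q)" using finite_U by simp
    have lt: "card (U - (Q \<union> succs s)) < card (U - Q)"
      by (rule psubset_card_mono[OF fUQ sub])
    have "W - {s} \<union> (succs s - Q) \<subseteq> U" using I SU by auto
    then have cw: "card (W - {s} \<union> (succs s - Q)) \<le> card U" by (rule card_mono[OF finite_U])
    have "card (U - (Q \<union> succs s)) * (card U + 1) + card (W - {s} \<union> (succs s - Q))
          < card (U - Q) * (card U + 1) + card W"
      using arith_aux[OF lt cw] .
    then show ?thesis unfolding c c' meas_def by simp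
  qed
  ultimately show ?thesis by blast
qed

lemma Inv_star: "(alg_step D C)\<^sup>*\<^sup>* c c' \<Longrightarrow> Inv c \<Longrightarrow> Inv c'"
  by (induction rule: rtranclp_induct) (auto dest: Inv_step)

lemma exists_final: "Inv c \<Longrightarrow> \<exists>c'. (alg_step D C)\<^sup>*\<^sup>* c c' \<and> fst (snd c') = {}"
proof (induction "meas c" arbitrary: c rule: less_induct)
  case less
  obtain Q W R where c: "c = (Q, W, R)" by (cases c) auto
  show ?case
  proof (cases "W = {}")
    case True then show ?thesis using c by auto
  next
    case False
    then obtain s where s: "s \<in> W" by auto
    define c' where "c' = (Q \<union> succs s, (W - {s}) \<union> (succs s - Q), R \<union> edges s)"
    have st: "alg_step D C c c'" unfolding c step_iff c'_def using s by blast
    have "Inv c' \<and> meas c' < meas c" using Inv_step[OF less.prems st] .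
    then obtain c'' where "(alg_step D C)\<^sup>*\<^sup>* c' c''" "fst (snd c'') = {}" using less.hyps by blast
    then show ?thesis using st by (meson converse_rtranclp_into_rtranclp)
  qed
qed

lemma final_out:
  assumes "Inv c" "fst (snd c) = {}"
  shows "alg_output D M0 \<alpha>0 Mf c = induced_gfa D C M0 \<alpha>0 Mf"
proof -
  obtain Q W R where c: "c = (Q, W, R)" by (cases c) auto
  have W: "W = {}" using assms(2) c by simp
  have I: "alg_q0 D M0 \<alpha>0 \<in> Q" "Q \<subseteq> U" "R \<subseteq> Rind" "\<forall>e\<in>R. snd (snd e) \<in> Q"
     "\<forall>e\<in>Rind. fst e \<in> Q \<longrightarrow> e \<in> R"
    using assms(1) unfolding Inv_def c W by auto
  have UQ0: "(fst z, tilde D C (snd z)) \<in> Q" if "(\<lambda>x y. \<exists>t \<beta>. fires D x t \<beta> y)\<^sup>*\<^sup>* (M0, \<alpha>0) z" for z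
    using that
  proof (induction rule: rtranclp_induct)
    case base then show ?case using I(1) q0_eq by simp
  next
    case (step y z)
    obtain M1 \<alpha>1 where y: "y = (M1, \<alpha>1)" by (cases y) auto
    obtain M \<alpha> where z: "z = (M, \<alpha>)" by (cases z) auto
    obtain t \<beta> where f: "fires D (M1, \<alpha>1) t \<beta> (M, \<alpha>)" using step.hyps(2) y z by blast
    have r1: "(M1, \<alpha>1) \<in> reachable D (M0, \<alpha>0)" using step.hyps(1) y by (simp add: reachable_def)
    have r2: "(M, \<alpha>) \<in> reachable D (M0, \<alpha>0)" using reach_step[OF r1 f] .
    define e where "e = ((M1, tilde D C \<alpha>1), label_and (lab D t) (guard_of D t (tilde D C \<alpha>)), (M, tilde D C \<alpha>))"
    have "e \<in> Rind" unfolding e_def using Rind_I[OF U_I[OF r1] U_I[OF r2] f] .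
    moreover have "fst e \<in> Q" using step.IH y unfolding e_def by simp
    ultimately have "e \<in> R" using I(5) by blast
    then show ?case using I(4) z unfolding e_def by force
  qed
  have UQ: "(M, tilde D C \<alpha>) \<in> Q" if "(M, \<alpha>) \<in> reachable D (M0, \<alpha>0)" for M \<alpha>
    using UQ0[of "(M, \<alpha>)"] that by (simp add: reachable_def)
  have QU: "Q = U"
  proof
    show "U \<subseteq> Q" using UQ unfolding U_def by blast
  qed (rule I(2))
  have RR: "R = Rind"
  proof
    show "Rind \<subseteq> R"
    proof
      fix e assume "e \<in> Rind"
      then have "fst e \<in> U" unfolding Rind_def by auto
      then show "e \<in> R" using I(5) QU \<open>e \<in> Rind\<close> by blast
    qed
  qed (rule I(3))
  show ?thesis unfolding induced_eq alg_output_def c QU RR q0_eq by simp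
qed

lemma no_infinite:
  "\<not> (\<exists>f. f 0 = alg_init D M0 \<alpha>0 \<and> (\<forall>i. alg_step D C (f i) (f (Suc i))))"
proof
  assume "\<exists>f. f 0 = alg_init D M0 \<alpha>0 \<and> (\<forall>i. alg_step D C (f i) (f (Suc i)))"
  then obtain f where f0: "f 0 = alg_init D M0 \<alpha>0" and st: "\<forall>i. alg_step D C (f i) (f (Suc i))" by blast
  have I: "Inv (f i)" for i
    by (induction i) (use f0 Inv_init st Inv_step in auto)
  have "meas (f i) + i \<le> meas (f 0)" for i
  proof (induction i)
    case (Suc i)
    have "meas (f (Suc i)) < meas (f i)" using Inv_step[OF I st[rule_format]] by blast
    then show ?case using Suc.IH by simp
  qed simp
  from this[of "Suc (meas (f 0))"] show False by simp
qed

end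

theorem theorem1:
  fixes E :: "('n \<times> 'a::linorder set) set"
    and D :: "('p, 't, 'n, 'a) dpn"
    and M0 Mf :: "'p \<Rightarrow> nat"
    and \<alpha>0 :: "'a \<Rightarrow> real"
    and C :: "real set"
  assumes "event_sigs E"
    and "is_dpnif E D M0 \<alpha>0 Mf"
    and "safe D (M0, \<alpha>0)"
    and "well_formed E D"
    and "finite C"
    and "\<forall>t \<in> trans D. gconsts (rguard D t) \<union> gconsts (wguard D t) \<subseteq> C"
    and "\<forall>v \<in> vars D. \<alpha>0 v \<in> C"
  shows "\<not> (\<exists>f. f 0 = alg_init D M0 \<alpha>0 \<and> (\<forall>i. alg_step D C (f i) (f (Suc i))))
    \<and> (\<exists>c. (alg_step D C)\<^sup>*\<^sup>* (alg_init D M0 \<alpha>0) c \<and> fst (snd c) = {})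
    \<and> (\<forall>c. (alg_step D C)\<^sup>*\<^sup>* (alg_init D M0 \<alpha>0) c \<and> fst (snd c) = {}
           \<longrightarrow> alg_output D M0 \<alpha>0 Mf c = induced_gfa D C M0 \<alpha>0 Mf)"
proof -
  have dpn: "is_dpn E D" and M0z: "\<forall>p. p \<notin> places D \<longrightarrow> M0 p = 0"
    using assms(2) unfolding is_dpnif_def by auto
  have finP: "finite (places D)"
    and flowz: "\<forall>p t. p \<notin> places D \<longrightarrow> flow_in D p t = 0 \<and> flow_out D t p = 0"
    and Vsub: "vars D \<subseteq> sig_attrs E"
    using dpn unfolding is_dpn_def by auto
  have "finite (sig_attrs E)" using assms(1) unfolding event_sigs_def sig_attrs_def by auto
  then have finV: "finite (vars D)" using Vsub finite_subset by blast
  have Cne: "vars D \<noteq> {} \<Longrightarrow> C \<noteq> {}" using assms(7) by auto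
  interpret setting2 D C M0 \<alpha>0
    by unfold_locales (use assms(5,6,7,3) finP finV M0z flowz Cne in auto)
  show ?thesis
  proof (intro conjI allI impI)
    show "\<not> (\<exists>f. f 0 = alg_init D M0 \<alpha>0 \<and> (\<forall>i. alg_step D C (f i) (f (Suc i))))"
      by (rule no_infinite)
    show "\<exists>c. (alg_step D C)\<^sup>*\<^sup>* (alg_init D M0 \<alpha>0) c \<and> fst (snd c) = {}"
      by (rule exists_final[OF Inv_init])
  next
    fix c assume h: "(alg_step D C)\<^sup>*\<^sup>* (alg_init D M0 \<alpha>0) c \<and> fst (snd c) = {}"
    then have "Inv c" using Inv_star Inv_init by blast
    then show "alg_output D M0 \<alpha>0 Mf c = induced_gfa D C M0 \<alpha>0 Mf" using final_out h by blast
  qed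
qed

end
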